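(* Let $\{\mathcal{F}_n\}_{n\ge0}$ be a filtration of sub-$\sigma$-fields of $\mathcal{F}$, let $X\in L^\infty$, and let $\{X_n\}_{n\ge0}$ be a sequence with $X_n\in\mathbb{E}[X\mid\mathcal{F}_n]$ for all $n$ (a martingale). If $T$ is a stopping time with values in $\{0,1,2,\dots\}$, then $X_T:=\sum_n\mathbf{1}\{T=n\}X_n\in\mathbb{E}[X\mid\mathcal{F}_T]$.
   Context: $\mathbb{K}$ is a local field with non-archimedean absolute value $|\cdot|$ satisfying $|x|=0 \iff x=0$, $|xy|=|x||y|$, $|x+y|\le|x|\vee|y|$. $(\Omega,\mathcal{F},\mathbb{P})$ is a probability space; all (in)equalities are a.s. $L^\infty$ is the space of $\mathbb{K}$-valued random variables $X$ with $\operatorname{ess\,sup}|X|<\infty$; $L^\infty(\mathcal{G})$ its $\mathcal{G}$-measurable subspace. For a non-negative real random variable $S$, $\operatorname{ess\,sup}\{S\mid\mathcal{G}\}:=\sup_{p\ge1}\mathbb{E}[S^p\mid\mathcal{G}]^{1/p}$ (usual real conditional expectation), $\|X\|_\mathcal{G}:=\operatorname{ess\,sup}\{|X|\mid\mathcal{G}\}$, and the conditional expectation is the set $\mathbb{E}[X\mid\mathcal{G}]:=\{Y\in L^\infty(\mathcal{G}): \|X-Y\|_\mathcal{G}\le\|X-Z\|_\mathcal{G}\text{ for all }Z\in L^\infty(\mathcal{G})\}$. A stopping time satisfies $\{T=n\}\in\mathcal{F}_n$ for all $n$; $\mathcal{F}_T$ is the $\sigma$-field of events $A$ with $A\cap\{T=n\}\in\mathcal{F}_n$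 for all $n$. $\mathbf{1}\{T=n\}$ is the $\mathbb{K}$-valued indicator ($1_\mathbb{K}$ on the event, $0_\mathbb{K}$ off it). *)

theory Defs
  imports "HOL-Probability.Probability"
begin

definition nonarch_abs :: "('k::field \<Rightarrow> real) \<Rightarrow> bool" where
  "nonarch_abs av \<longleftrightarrow>
     (\<forall>x. 0 \<le> av x) \<and> (\<forall>x. av x = 0 \<longleftrightarrow> x = 0) \<and>
     (\<forall>x y. av (x * y) = av x * av y) \<and>
     (\<forall>x y. av (x + y) \<le> max (av x) (av y))"

text \<open>Local field: nontrivial non-archimedean absolute value whose closed unit ball is
  (sequentially) compact for the metric d(x,y) = av(x - y), i.e. the field is locally compact
  and non-discrete.\<close>
definition nonarch_local_field :: "('k::field \<Rightarrow> real) \<Rightarrow> bool" where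
  "nonarch_local_field av \<longleftrightarrow> nonarch_abs av \<and> (\<exists>x. 0 < av x \<and> av x < 1) \<and>
     (\<forall>s::nat \<Rightarrow> 'k. (\<forall>n. av (s n) \<le> 1) \<longrightarrow>
        (\<exists>r l. strict_mono r \<and> av l \<le> 1 \<and> (\<lambda>n. av (s (r n) - l)) \<longlonglongrightarrow> 0))"

text \<open>Borel sigma-algebra of the field (generated by the open balls; the field is separable).\<close>
definition kborel :: "('k::field \<Rightarrow> real) \<Rightarrow> 'k measure" where
  "kborel av = sigma UNIV {{y. av (y - x) < r} | x r. True}"

definition Linf :: "'a measure \<Rightarrow> 'a measure \<Rightarrow> ('k::field \<Rightarrow> real) \<Rightarrow> ('a \<Rightarrow> 'k) set" where
  "Linf M G av = {Y. Y \<in> measurable G (kborel av) \<and> (\<exists>C. AE \<omega> in M. av (Y \<omega>) \<le> C)}"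

definition cond_esssup :: "'a measure \<Rightarrow> 'a measure \<Rightarrow> ('a \<Rightarrow> real) \<Rightarrow> 'a \<Rightarrow> ennreal" where
  "cond_esssup M G S \<omega> =
     (SUP p\<in>{1::nat..}. ennreal (real_cond_exp M G (\<lambda>x. S x ^ p) \<omega> powr (1 / real p)))"

definition cond_norm :: "'a measure \<Rightarrow> 'a measure \<Rightarrow> ('k::field \<Rightarrow> real) \<Rightarrow> ('a \<Rightarrow> 'k) \<Rightarrow> 'a \<Rightarrow> ennreal" where
  "cond_norm M G av X = cond_esssup M G (\<lambda>\<omega>. av (X \<omega>))"

definition kcond_exp :: "'a measure \<Rightarrow> 'a measure \<Rightarrow> ('k::field \<Rightarrow> real) \<Rightarrow> ('a \<Rightarrow> 'k) \<Rightarrow> ('a \<Rightarrow> 'k) set" where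
  "kcond_exp M G av X = {Y \<in> Linf M G av.
     \<forall>Z \<in> Linf M G av. AE \<omega> in M.
        cond_norm M G av (\<lambda>x. X x - Y x) \<omega> \<le> cond_norm M G av (\<lambda>x. X x - Z x) \<omega>}"

definition filtration :: "'a measure \<Rightarrow> (nat \<Rightarrow> 'a measure) \<Rightarrow> bool" where
  "filtration M F \<longleftrightarrow> (\<forall>n. subalgebra M (F n)) \<and> (\<forall>n m. n \<le> m \<longrightarrow> sets (F n) \<subseteq> sets (F m))"

definition stopping_time_nat :: "'a measure \<Rightarrow> (nat \<Rightarrow> 'a measure) \<Rightarrow> ('a \<Rightarrow> nat) \<Rightarrow> bool" where
  "stopping_time_nat M F T \<longleftrightarrow> (\<forall>n. {\<omega> \<in> space M. T \<omega> = n} \<in> sets (F n))"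

definition stopped_sigma :: "'a measure \<Rightarrow> (nat \<Rightarrow> 'a measure) \<Rightarrow> ('a \<Rightarrow> nat) \<Rightarrow> 'a measure" where
  "stopped_sigma M F T = sigma (space M)
     {A \<in> sets M. \<forall>n. A \<inter> {\<omega> \<in> space M. T \<omega> = n} \<in> sets (F n)}"

end

theory Submission
  imports Defs
begin



locale nav =
  fixes av :: "'k::field \<Rightarrow> real"
  assumes na: "nonarch_abs av"
begin

lemma av_nonneg[simp]: "0 \<le> av x" using na unfolding nonarch_abs_def by auto
lemma zero_iff[simp]: "av x = 0 \<longleftrightarrow> x = 0" using na unfolding nonarch_abs_def by auto
lemma mult: "av (x * y) = av x * av y" using na unfolding nonarch_abs_def by auto
lemma ultra: "av (x + y) \<le> max (av x) (av y)" using na unfolding nonarch_abs_def by auto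
lemma zero[simp]: "av 0 = 0" by simp
lemma one[simp]: "av 1 = 1"
proof -
  have "av 1 = av 1 * av 1" using mult[of 1 1] by simp
  moreover have "av 1 \<noteq> 0" by simp
  ultimately show ?thesis by (metis mult_cancel_left1)
qed
lemma minus_one[simp]: "av (-1) = 1"
proof -
  have h: "av (-1) * av (-1) = 1" using mult[of "-1" "-1"] by simp
  have "(av (-1) - 1) * (av (-1) + 1) = 0" using h by (simp add: algebra_simps)
  moreover have "av (-1) + 1 \<noteq> 0" using av_nonneg[of "-1"] by linarith
  ultimately show ?thesis by simp
qed
lemma minus[simp]: "av (- x) = av x"
  using mult[of "-1" x] by simp
lemma diff_comm: "av (x - y) = av (y - x)"
  by (metis minus minus_diff_eq)
lemma diff_le: "av (x - y) \<le> max (av x) (av y)"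
  using ultra[of x "-y"] by simp
lemma tri: "av (x - z) \<le> max (av (x - y)) (av (y - z))"
  using ultra[of "x - y" "y - z"] by simp
lemma inv: "av (inverse x) = inverse (av x)"
proof (cases "x = 0")
  case False
  have "av (inverse x) * av x = 1" using mult[of "inverse x" x] False by simp
  then show ?thesis by (metis inverse_unique mult.commute)
qed simp
lemma pow: "av (x ^ k) = av x ^ k"
  by (induction k) (simp_all add: mult)

lemma metric: "Metric_space UNIV (\<lambda>x y. av (x - y))"
proof
  fix x y z :: 'k
  show "av (x - y) = av (y - x)" by (rule diff_comm)
  show "av (x - z) \<le> av (x - y) + av (y - z)"
    using tri[of x z y] av_nonneg[of "x - y"] av_nonneg[of "y-z"] by linarith
qed auto

end

lemma separable:
  fixes av :: "'k::field \<Rightarrow> real"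
  assumes "nonarch_local_field av"
  shows "\<exists>D. countable D \<and> (\<forall>x r. 0 < r \<longrightarrow> (\<exists>q\<in>D. av (x - q) < r))"
proof -
  have na: "nonarch_abs av" using assms unfolding nonarch_local_field_def by auto
  interpret nav av by (rule nav.intro[OF na])
  interpret Metric_space UNIV "\<lambda>x y. av (x - y)" by (rule metric)
  obtain \<pi> where pi: "0 < av \<pi>" "av \<pi> < 1" using assms unfolding nonarch_local_field_def by auto
  let ?B = "{x::'k. av x \<le> 1}"
  have tb: "mtotally_bounded ?B"
    unfolding mtotally_bounded_sequentially
  proof (intro conjI allI impI)
    fix \<sigma> :: "nat \<Rightarrow> 'k" assume "range \<sigma> \<subseteq> ?B"
    then have "\<forall>n. av (\<sigma> n) \<le> 1" by auto
    then obtain r l where r: "strict_mono r" and lim: "(\<lambda>n. av (\<sigma> (r n) - l)) \<longlonglongrightarrow> 0"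
      using assms unfolding nonarch_local_field_def by blast
    have "MCauchy (\<sigma> \<circ> r)"
      unfolding MCauchy_def
    proof (intro conjI allI impI)
      fix e :: real assume "0 < e"
      from lim[unfolded lim_sequentially] \<open>0 < e\<close> obtain N where
        "\<forall>n\<ge>N. dist (av (\<sigma> (r n) - l)) 0 < e" by blast
      then have N: "\<And>n. n \<ge> N \<Longrightarrow> av (\<sigma> (r n) - l) < e" by (simp add: dist_real_def)
      show "\<exists>N. \<forall>n n'. N \<le> n \<longrightarrow> N \<le> n' \<longrightarrow> av ((\<sigma> \<circ> r) n - (\<sigma> \<circ> r) n') < e"
      proof (intro exI allI impI)
        fix n n' assume "N \<le> n" "N \<le> n'"
        then show "av ((\<sigma> \<circ> r) n - (\<sigma> \<circ> r) n') < e"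
        proof -
          have "av (\<sigma> (r n) - \<sigma> (r n')) \<le> max (av (\<sigma> (r n) - l)) (av (l - \<sigma> (r n')))"
            by (rule tri)
          moreover have "av (l - \<sigma> (r n')) < e" using N[of n'] \<open>N \<le> n'\<close> diff_comm[of l "\<sigma> (r n')"] by simp
          moreover have "av (\<sigma> (r n) - l) < e" using N[of n] \<open>N \<le> n\<close> by simp
          ultimately show ?thesis by simp
        qed
      qed
    qed simp
    then show "\<exists>r. strict_mono r \<and> MCauchy (\<sigma> \<circ> r)" using r by blast
  qed simp
  have "\<forall>m::nat. \<exists>K. finite K \<and> K \<subseteq> ?B \<and> ?B \<subseteq> (\<Union>x\<in>K. mball x (inverse (real (Suc m))))"
    using tb unfolding mtotally_bounded_def by auto
  then obtain K where KK: "\<forall>m. finite (K m) \<and> K m \<subseteq> ?B \<and> ?B \<subseteq> (\<Union>x\<in>K m. mball x (inverse (real (Suc m))))"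
    by (rule choice[THEN exE]) blast
  have K: "\<And>m. finite (K m)" "\<And>m. ?B \<subseteq> (\<Union>x\<in>K m. mball x (inverse (real (Suc m))))"
    using KK by auto
  define D where "D = (\<Union>k::nat. \<Union>m::nat. (\<lambda>q. inverse \<pi> ^ k * q) ` K m)"
  have "countable D" unfolding D_def by (intro countable_UN[OF countableI_type] countable_image countable_finite K(1))
  moreover have "\<exists>q\<in>D. av (x - q) < r" if "0 < r" for x r
  proof -
    have pi0: "\<pi> \<noteq> 0" using pi by auto
    have "0 < inverse (av x + 1)" using av_nonneg[of x] by (simp add: add_nonneg_pos)
    then obtain k where k: "av \<pi> ^ k < inverse (av x + 1)" using real_arch_pow_inv pi by blast
    define z where "z = \<pi> ^ k * x"
    have "av z = av \<pi> ^ k * av x" unfolding z_def by (simp add: mult pow)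
    also have "\<dots> \<le> inverse (av x + 1) * av x"
      using k av_nonneg[of x] by (intro mult_right_mono) auto
    also have "\<dots> \<le> 1" proof - have p: "0 < 1 + av x" using av_nonneg[of x] by linarith show ?thesis using p by (simp add: field_simps pos_divide_le_eq) qed
    finally have zB: "z \<in> ?B" by simp
    have pk: "0 < av \<pi> ^ k" using pi by simp
    obtain m where m: "inverse (real (Suc m)) < r * av \<pi> ^ k"
      using reals_Archimedean[of "r * av \<pi> ^ k"] pk \<open>0 < r\<close> by auto
    obtain q where q: "q \<in> K m" "av (q - z) < inverse (real (Suc m))"
      using K(2)[of m] zB by auto
    have inD: "inverse \<pi> ^ k * q \<in> D" unfolding D_def using q by blast
    have eq: "x - inverse \<pi> ^ k * q = inverse \<pi> ^ k * (z - q)"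
      unfolding z_def using pi0 by (simp add: field_simps)
    have "av (x - inverse \<pi> ^ k * q) = inverse (av \<pi>) ^ k * av (q - z)"
      unfolding eq by (simp add: mult pow inv diff_comm)
    also have "\<dots> < inverse (av \<pi>) ^ k * (r * av \<pi> ^ k)"
      using q m pi by (intro mult_strict_left_mono) auto
    also have "\<dots> = r" using pi pi0 by (simp add: field_simps power_inverse)
    finally show ?thesis using inD by blast
  qed
  ultimately show ?thesis by blast
qed




lemma nav_local: "nonarch_local_field av \<Longrightarrow> nav av"
  by (rule nav.intro) (simp add: nonarch_local_field_def)

lemma kborel_ball: "{y. av (y - q) < a} \<in> sets (kborel av)"
  unfolding kborel_def by (subst sets_measure_of) (auto intro: sigma_sets.Basic)

lemma space_kborel[simp]: "space (kborel av) = UNIV"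
  unfolding kborel_def by (subst space_measure_of) auto

lemma meas_avdiff:
  fixes av :: "'k::field \<Rightarrow> real"
  assumes loc: "nonarch_local_field av" and X: "X \<in> measurable N (kborel av)"
    and Y: "Y \<in> measurable N (kborel av)"
  shows "(\<lambda>\<omega>. av (X \<omega> - Y \<omega>)) \<in> borel_measurable N"
proof -
  interpret nav av by (rule nav_local[OF loc])
  obtain D where D: "countable D" "\<And>x r. 0 < r \<Longrightarrow> \<exists>q\<in>D. av (x - q) < r"
    using separable[OF loc] by blast
  show ?thesis unfolding borel_measurable_iff_less
  proof
    fix a :: real
    have eq: "{w \<in> space N. av (X w - Y w) < a} =
      (\<Union>q\<in>D. (X -` {y. av (y - q) < a} \<inter> space N) \<inter> (Y -` {y. av (y - q) < a} \<inter> space N))"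
    proof (intro equalityI subsetI)
      fix w assume w: "w \<in> {w \<in> space N. av (X w - Y w) < a}"
      from w have "av (X w - Y w) < a" by simp
      then have "0 < a" using av_nonneg[of "X w - Y w"] by linarith
      then obtain q where q: "q \<in> D" "av (X w - q) < a" using D(2) by blast
      have "av (Y w - q) \<le> max (av (Y w - X w)) (av (X w - q))" by (rule tri)
      moreover have "av (Y w - X w) < a" using w diff_comm[of "Y w" "X w"] by simp
      ultimately have "av (Y w - q) < a" using q by simp
      then show "w \<in> (\<Union>q\<in>D. (X -` {y. av (y - q) < a} \<inter> space N) \<inter> (Y -` {y. av (y - q) < a} \<inter> space N))"
        using q w by blast
    next
      fix w assume "w \<in> (\<Union>q\<in>D. (X -` {y. av (y - q) < a} \<inter> space N) \<inter> (Y -` {y. av (y - q) < a} \<inter> space N))"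
      then obtain q where q: "w \<in> space N" "av (X w - q) < a" "av (Y w - q) < a" by blast
      have "av (X w - Y w) \<le> max (av (X w - q)) (av (q - Y w))" by (rule tri)
      then have "av (X w - Y w) < a" using q diff_comm[of q "Y w"] by simp
      then show "w \<in> {w \<in> space N. av (X w - Y w) < a}" using q by blast
    qed
    show "{w \<in> space N. av (X w - Y w) < a} \<in> sets N"
      unfolding eq using D(1)
      by (intro sets.countable_UN'' sets.Int measurable_sets[OF X kborel_ball] measurable_sets[OF Y kborel_ball])
  qed
qed

section \<open>Stopped sigma algebra\<close>

lemma st_space[simp]: "space (stopped_sigma M F T) = space M"
  unfolding stopped_sigma_def by (subst space_measure_of) (auto dest: sets.sets_into_space)

lemma st_sets: "sets (stopped_sigma M F T) =
   sigma_sets (space M) {A \<in> sets M. \<forall>n. A \<inter> {\<omega> \<in> space M. T \<omega> = n} \<in> sets (F n)}"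
  unfolding stopped_sigma_def by (subst sets_measure_of) (auto dest: sets.sets_into_space)

lemma filt_sub: "filtration M F \<Longrightarrow> sets (F n) \<subseteq> sets M"
  unfolding filtration_def subalgebra_def by auto

lemma filt_space[simp]: "filtration M F \<Longrightarrow> space (F n) = space M"
  unfolding filtration_def subalgebra_def by auto

lemma filt_subalg: "filtration M F \<Longrightarrow> subalgebra M (F n)"
  unfolding filtration_def by auto

lemma st_Tn: "stopping_time_nat M F T \<Longrightarrow> {\<omega> \<in> space M. T \<omega> = n} \<in> sets (F n)"
  unfolding stopping_time_nat_def by auto

lemma st_setsD:
  assumes filt: "filtration M F" and st: "stopping_time_nat M F T"
    and A: "A \<in> sets (stopped_sigma M F T)"
  shows "A \<in> sets M \<and> (\<forall>n. A \<inter> {\<omega> \<in> space M. T \<omega> = n} \<in> sets (F n))"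
  using A unfolding st_sets
proof (induction rule: sigma_sets.induct)
  case (Basic a) then show ?case by auto
next
  case Empty then show ?case by auto
next
  case (Compl a)
  have "\<forall>n. (space M - a) \<inter> {\<omega> \<in> space M. T \<omega> = n} \<in> sets (F n)"
  proof
    fix n
    have "(space M - a) \<inter> {\<omega> \<in> space M. T \<omega> = n} =
       {\<omega> \<in> space M. T \<omega> = n} - (a \<inter> {\<omega> \<in> space M. T \<omega> = n})" by auto
    then show "(space M - a) \<inter> {\<omega> \<in> space M. T \<omega> = n} \<in> sets (F n)"
      using Compl st_Tn[OF st, of n] by auto
  qed
  then show ?case using Compl by auto
next
  case (Union a)
  have "\<forall>n. (\<Union>i. a i) \<inter> {\<omega> \<in> space M. T \<omega> = n} \<in> sets (F n)"
  proof
    fix n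
    have "(\<Union>i. a i) \<inter> {\<omega> \<in> space M. T \<omega> = n} = (\<Union>i. a i \<inter> {\<omega> \<in> space M. T \<omega> = n})" by auto
    moreover have "(\<Union>i. a i \<inter> {\<omega> \<in> space M. T \<omega> = n}) \<in> sets (F n)"
      by (rule sets.countable_UN) (use Union in blast)
    ultimately show "(\<Union>i. a i) \<inter> {\<omega> \<in> space M. T \<omega> = n} \<in> sets (F n)"
      by argo
  qed
  then show ?case using Union by auto
qed

lemma st_setsI:
  "A \<in> sets M \<Longrightarrow> (\<And>n. A \<inter> {\<omega> \<in> space M. T \<omega> = n} \<in> sets (F n)) \<Longrightarrow> A \<in> sets (stopped_sigma M F T)"
  unfolding st_sets by (auto intro: sigma_sets.Basic)

lemma st_subalg:
  assumes filt: "filtration M F" and st: "stopping_time_nat M F T"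
  shows "subalgebra M (stopped_sigma M F T)"
  unfolding subalgebra_def using st_setsD[OF filt st] by auto

lemma st_Tn_FT:
  assumes filt: "filtration M F" and st: "stopping_time_nat M F T"
  shows "{\<omega> \<in> space M. T \<omega> = n} \<in> sets (stopped_sigma M F T)"
proof (rule st_setsI)
  show "{\<omega> \<in> space M. T \<omega> = n} \<in> sets M" using st_Tn[OF st] filt_sub[OF filt] by blast
  fix m
  show "{\<omega> \<in> space M. T \<omega> = n} \<inter> {\<omega> \<in> space M. T \<omega> = m} \<in> sets (F m)"
  proof (cases "m = n")
    case True then show ?thesis using st_Tn[OF st, of m] by simp
  next
    case False
    then have "{\<omega> \<in> space M. T \<omega> = n} \<inter> {\<omega> \<in> space M. T \<omega> = m} = {}" by auto
    then show ?thesis by simp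
  qed
qed

lemma st_measurable:
  assumes filt: "filtration M F" and st: "stopping_time_nat M F T"
    and h: "\<And>m. h m \<in> measurable (F m) N"
    and eq: "\<And>m \<omega>. \<omega> \<in> space M \<Longrightarrow> T \<omega> = m \<Longrightarrow> f \<omega> = h m \<omega>"
  shows "f \<in> measurable (stopped_sigma M F T) N"
proof (rule measurableI)
  fix \<omega> assume "\<omega> \<in> space (stopped_sigma M F T)"
  then have "\<omega> \<in> space (F (T \<omega>))" "\<omega> \<in> space M" using filt by auto
  then show "f \<omega> \<in> space N" using eq[of \<omega> "T \<omega>"] measurable_space[OF h] by auto
next
  fix U assume U: "U \<in> sets N"
  have part: "f -` U \<inter> space M \<inter> {\<omega> \<in> space M. T \<omega> = m} \<in> sets (F m)" for m
  proof -
    have "f -` U \<inter> space M \<inter> {\<omega> \<in> space M. T \<omega> = m} = (h m -` U \<inter> space (F m)) \<inter> {\<omega> \<in> space M. T \<omega> = m}"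
      using eq filt by auto
    then show ?thesis using measurable_sets[OF h U] st_Tn[OF st] by auto
  qed
  have "f -` U \<inter> space M = (\<Union>m. f -` U \<inter> space M \<inter> {\<omega> \<in> space M. T \<omega> = m})" by auto
  also have "\<dots> \<in> sets M" using part filt_sub[OF filt] by (intro sets.countable_UN) auto
  finally have "f -` U \<inter> space M \<in> sets M" .
  moreover have "f -` U \<inter> space M \<inter> {\<omega> \<in> space M. T \<omega> = m} \<in> sets (F m)" for m by (rule part)
  ultimately show "f -` U \<inter> space (stopped_sigma M F T) \<in> sets (stopped_sigma M F T)"
    by (auto intro: st_setsI)
qed

lemma st_restrict:
  assumes filt: "filtration M F" and st: "stopping_time_nat M F T"
    and Z: "Z \<in> measurable (stopped_sigma M F T) N" and c: "c \<in> space N"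
  shows "(\<lambda>\<omega>. if T \<omega> = n then Z \<omega> else c) \<in> measurable (F n) N"
proof (rule measurableI)
  fix \<omega> assume "\<omega> \<in> space (F n)"
  then show "(if T \<omega> = n then Z \<omega> else c) \<in> space N" using measurable_space[OF Z] c filt by auto
next
  fix U assume U: "U \<in> sets N"
  have "(\<lambda>\<omega>. if T \<omega> = n then Z \<omega> else c) -` U \<inter> space (F n) =
     ((Z -` U \<inter> space M) \<inter> {\<omega> \<in> space M. T \<omega> = n}) \<union>
     (if c \<in> U then space (F n) - {\<omega> \<in> space M. T \<omega> = n} else {})"
    using filt by (auto split: if_splits)
  moreover have "(Z -` U \<inter> space M) \<inter> {\<omega> \<in> space M. T \<omega> = n} \<in> sets (F n)"
    using st_setsD[OF filt st, of "Z -` U \<inter> space M"] measurable_sets[OF Z U] by auto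
  moreover have "space (F n) - {\<omega> \<in> space M. T \<omega> = n} \<in> sets (F n)"
    using st_Tn[OF st] by auto
  ultimately show "(\<lambda>\<omega>. if T \<omega> = n then Z \<omega> else c) -` U \<inter> space (F n) \<in> sets (F n)"
    by auto
qed




lemma sfs: "prob_space M \<Longrightarrow> subalgebra M G \<Longrightarrow> sigma_finite_subalgebra M G"
  by (rule finite_measure_subalgebra_is_sigma_finite)
     (simp add: finite_measure_subalgebra_def finite_measure_subalgebra_axioms_def prob_space_def)

lemma CE_local:
  assumes P: "prob_space M" and sub: "subalgebra M G" and A: "A \<in> sets G"
    and f: "integrable M f" and g: "integrable M g"
    and ae: "AE x in M. x \<in> A \<longrightarrow> f x = g x"
  shows "AE x in M. x \<in> A \<longrightarrow> real_cond_exp M G f x = real_cond_exp M G g x"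
proof -
  interpret sigma_finite_subalgebra M G by (rule sfs[OF P sub])
  have AM: "A \<in> sets M" using A sub unfolding subalgebra_def by auto
  have [measurable]: "f \<in> borel_measurable M" "g \<in> borel_measurable M" using f g by auto
  have iA: "indicator A \<in> borel_measurable G" using A by simp
  have h1: "AE x in M. real_cond_exp M G (\<lambda>x. indicator A x * f x) x = indicator A x * real_cond_exp M G f x"
    by (rule real_cond_exp_mult[OF iA]) (use integrable_real_mult_indicator[OF AM f] in \<open>auto simp: mult.commute\<close>)
  have h2: "AE x in M. real_cond_exp M G (\<lambda>x. indicator A x * g x) x = indicator A x * real_cond_exp M G g x"
    by (rule real_cond_exp_mult[OF iA]) (use integrable_real_mult_indicator[OF AM g] in \<open>auto simp: mult.commute\<close>)
  have h3: "AE x in M. real_cond_exp M G (\<lambda>x. indicator A x * f x) x = real_cond_exp M G (\<lambda>x. indicator A x * g x) x"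
    by (rule real_cond_exp_cong) (use ae AM in \<open>auto simp: indicator_def\<close>)
  show ?thesis using h1 h2 h3 by eventually_elim (auto simp: indicator_def)
qed

lemma CE_stopped:
  assumes P: "prob_space M" and filt: "filtration M F" and st: "stopping_time_nat M F T"
    and f: "integrable M f"
  shows "AE x in M. T x = n \<longrightarrow> real_cond_exp M (stopped_sigma M F T) f x = real_cond_exp M (F n) f x"
proof -
  interpret S: sigma_finite_subalgebra M "stopped_sigma M F T" by (rule sfs[OF P st_subalg[OF filt st]])
  interpret Fn: sigma_finite_subalgebra M "F n" by (rule sfs[OF P filt_subalg[OF filt]])
  define A where "A = {\<omega> \<in> space M. T \<omega> = n}"
  have AFn: "A \<in> sets (F n)" unfolding A_def by (rule st_Tn[OF st])
  have AM: "A \<in> sets M" using AFn filt_sub[OF filt] by auto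
  have AFT: "A \<in> sets (stopped_sigma M F T)" unfolding A_def by (rule st_Tn_FT[OF filt st])
  have [measurable]: "f \<in> borel_measurable M" using f by auto
  define g where "g = (\<lambda>\<omega>. indicator A \<omega> * real_cond_exp M (F n) f \<omega>)"
  have gFn: "g \<in> borel_measurable (F n)" unfolding g_def using AFn by simp
  have gFT: "g \<in> borel_measurable (stopped_sigma M F T)"
  proof (rule st_measurable[OF filt st, of "\<lambda>m. if m = n then g else (\<lambda>_. 0)"])
    fix m show "(if m = n then g else (\<lambda>_. 0)) \<in> borel_measurable (F m)" using gFn by auto
  next
    fix m \<omega> assume "\<omega> \<in> space M" "T \<omega> = m"
    then show "g \<omega> = (if m = n then g else (\<lambda>_. 0)) \<omega>" unfolding g_def A_def by auto
  qed
  have ig: "integrable M g" unfolding g_def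
    using integrable_real_mult_indicator[OF AM Fn.real_cond_exp_int(1)[OF f]] by (simp add: mult.commute)
  have iAf: "integrable M (\<lambda>x. indicator A x * f x)"
    using integrable_real_mult_indicator[OF AM f] by (simp add: mult.commute)
  have h1: "AE x in M. real_cond_exp M (stopped_sigma M F T) (\<lambda>x. indicator A x * f x) x = g x"
  proof (rule S.real_cond_exp_charact[OF _ iAf ig gFT])
    fix B assume B: "B \<in> sets (stopped_sigma M F T)"
    have BA: "B \<inter> A \<in> sets (F n)" using st_setsD[OF filt st B] unfolding A_def by auto
    have "(\<integral>x\<in>B. indicator A x * f x \<partial>M) = (\<integral>x\<in>B \<inter> A. f x \<partial>M)"
      unfolding set_lebesgue_integral_def by (intro Bochner_Integration.integral_cong) (auto simp: indicator_def)
    also have "\<dots> = (\<integral>x\<in>B \<inter> A. real_cond_exp M (F n) f x \<partial>M)"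
      by (rule Fn.real_cond_exp_intA[OF f BA])
    also have "\<dots> = (\<integral>x\<in>B. g x \<partial>M)"
      unfolding set_lebesgue_integral_def g_def by (intro Bochner_Integration.integral_cong) (auto simp: indicator_def)
    finally show "(\<integral>x\<in>B. indicator A x * f x \<partial>M) = (\<integral>x\<in>B. g x \<partial>M)" .
  qed
  have h2: "AE x in M. real_cond_exp M (stopped_sigma M F T) (\<lambda>x. indicator A x * f x) x
     = indicator A x * real_cond_exp M (stopped_sigma M F T) f x"
    by (rule S.real_cond_exp_mult) (use AFT iAf in auto)
  show ?thesis using h1 h2 AE_space by eventually_elim (auto simp: g_def A_def indicator_def)
qed

lemma powr_pow_inv: "0 \<le> (s::real) \<Longrightarrow> 1 \<le> p \<Longrightarrow> (s ^ p) powr (1 / real p) = s"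
proof (cases "s = 0")
  case True
  assume "1 \<le> p" then show ?thesis using True by simp
next
  case False
  assume "0 \<le> s" "1 \<le> p"
  then have "0 < s" using False by simp
  then have "s ^ p = s powr real p" by (simp add: powr_realpow)
  then show ?thesis using \<open>0 < s\<close> \<open>1 \<le> p\<close> by (simp add: powr_powr)
qed

lemma CN_pt:
  "(\<forall>p. real_cond_exp M G (\<lambda>x. S x ^ p) \<omega> = real_cond_exp M G' (\<lambda>x. S' x ^ p) \<omega>) \<Longrightarrow>
    cond_esssup M G S \<omega> = cond_esssup M G' S' \<omega>"
  by (simp add: cond_esssup_def)

lemma CN_self:
  assumes "\<forall>p. real_cond_exp M G (\<lambda>x. S x ^ p) \<omega> = v ^ p" and "0 \<le> v"
  shows "cond_esssup M G S \<omega> = ennreal v"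
proof -
  have "cond_esssup M G S \<omega> = (SUP p\<in>{1::nat..}. ennreal v)"
    unfolding cond_esssup_def using assms by (intro SUP_cong) (auto simp: powr_pow_inv)
  then show ?thesis by simp
qed

lemma CN_le:
  assumes "\<forall>p\<ge>1. 0 \<le> real_cond_exp M G (\<lambda>x. S x ^ p) \<omega> \<and> real_cond_exp M G (\<lambda>x. S x ^ p) \<omega> \<le> C ^ p"
    and "0 \<le> C"
  shows "cond_esssup M G S \<omega> \<le> ennreal C"
  unfolding cond_esssup_def
proof (rule SUP_least)
  fix p :: nat assume "p \<in> {1..}"
  then have p: "1 \<le> p" by simp
  have "real_cond_exp M G (\<lambda>x. S x ^ p) \<omega> powr (1 / real p) \<le> (C ^ p) powr (1 / real p)"
    using assms p by (intro powr_mono2) auto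
  also have "\<dots> = C" using powr_pow_inv[OF \<open>0 \<le> C\<close> p] .
  finally show "ennreal (real_cond_exp M G (\<lambda>x. S x ^ p) \<omega> powr (1 / real p)) \<le> ennreal C"
    by (rule ennreal_leI)
qed

lemma int_pow:
  fixes S :: "'a \<Rightarrow> real" and C :: real
  assumes P: "prob_space M" and S: "S \<in> borel_measurable M" and ae: "AE x in M. 0 \<le> S x \<and> S x \<le> C"
  shows "integrable M (\<lambda>x. S x ^ p)"
proof -
  interpret prob_space M by (rule P)
  show ?thesis
  proof (rule integrable_const_bound[where B="C ^ p"])
    show "AE x in M. norm (S x ^ p) \<le> C ^ p"
      using ae by eventually_elim (auto simp: power_abs intro: power_mono)
  qed (use S in simp)
qed

lemma int_avdiff:
  fixes av :: "'k::field \<Rightarrow> real"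
  assumes loc: "nonarch_local_field av" and P: "prob_space M"
    and X: "X \<in> measurable M (kborel av)" and W: "W \<in> measurable M (kborel av)"
    and bX: "AE x in M. av (X x) \<le> C1" and bW: "AE x in M. av (W x) \<le> C2"
  shows "integrable M (\<lambda>x. av (X x - W x) ^ p)"
proof -
  interpret nav av by (rule nav_local[OF loc])
  show ?thesis
  proof (rule int_pow[OF P meas_avdiff[OF loc X W], where C="max C1 C2"])
    show "AE x in M. 0 \<le> av (X x - W x) \<and> av (X x - W x) \<le> max C1 C2"
      using bX bW
    proof eventually_elim
      case (elim x)
      then show ?case using diff_le[of "X x" "W x"] by auto
    qed
  qed
qed




lemma meas_av:
  fixes av :: "'k::field \<Rightarrow> real"
  assumes loc: "nonarch_local_field av" and X: "X \<in> measurable N (kborel av)"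
  shows "(\<lambda>\<omega>. av (X \<omega>)) \<in> borel_measurable N"
  using meas_avdiff[OF loc X measurable_const[of "0::'k" "kborel av" N]] by simp

theorem mainTheorem18:
  fixes M :: "'a measure" and av :: "'k::field \<Rightarrow> real"
    and F :: "nat \<Rightarrow> 'a measure" and X :: "'a \<Rightarrow> 'k" and Xs :: "nat \<Rightarrow> 'a \<Rightarrow> 'k"
    and T :: "'a \<Rightarrow> nat"
  assumes "nonarch_local_field av"
    and "prob_space M"
    and "filtration M F"
    and "X \<in> Linf M M av"
    and "\<And>n. Xs n \<in> kcond_exp M (F n) av X"
    and "stopping_time_nat M F T"
  shows "(\<lambda>\<omega>. \<Sum>n\<le>T \<omega>. (if T \<omega> = n then 1 else 0) * Xs n \<omega>)
           \<in> kcond_exp M (stopped_sigma M F T) av X"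
proof -
  note loc = assms(1) and P = assms(2) and filt = assms(3) and st = assms(6)
  interpret nav av by (rule nav_local[OF loc])
  interpret prob_space M by (rule P)
  define Y where "Y = (\<lambda>\<omega>. Xs (T \<omega>) \<omega>)"
  have Yeq: "(\<lambda>\<omega>. \<Sum>n\<le>T \<omega>. (if T \<omega> = n then 1 else 0) * Xs n \<omega>) = Y"
  proof
    fix \<omega>
    have "(\<Sum>n\<le>T \<omega>. (if T \<omega> = n then 1 else 0) * Xs n \<omega>) = (\<Sum>n\<le>T \<omega>. if T \<omega> = n then Xs n \<omega> else 0)"
      by (rule sum.cong) auto
    also have "\<dots> = Xs (T \<omega>) \<omega>" by (simp add: sum.delta)
    finally show "(\<Sum>n\<le>T \<omega>. (if T \<omega> = n then 1 else 0) * Xs n \<omega>) = Y \<omega>" unfolding Y_def .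
  qed
  have XM: "X \<in> measurable M (kborel av)" using assms(4) unfolding Linf_def by auto
  obtain Cx where bX: "AE x in M. av (X x) \<le> Cx" using assms(4) unfolding Linf_def by auto
  define C where "C = max Cx 0"
  have C0: "0 \<le> C" unfolding C_def by simp
  have bXC: "AE x in M. av (X x) \<le> C" using bX unfolding C_def by eventually_elim auto
  have XnL: "Xs n \<in> Linf M (F n) av" for n using assms(5)[of n] unfolding kcond_exp_def by auto
  have best: "\<And>n Z. Z \<in> Linf M (F n) av \<Longrightarrow> AE \<omega> in M.
        cond_norm M (F n) av (\<lambda>x. X x - Xs n x) \<omega> \<le> cond_norm M (F n) av (\<lambda>x. X x - Z x) \<omega>"
    using assms(5) unfolding kcond_exp_def by auto
  have XnF: "Xs n \<in> measurable (F n) (kborel av)" for n using XnL unfolding Linf_def by auto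
  have XnM: "Xs n \<in> measurable M (kborel av)" for n
    using measurable_from_subalg[OF filt_subalg[OF filt] XnF] .
  have iX: "integrable M (\<lambda>x. av (X x) ^ p)" for p
    by (rule int_pow[OF P meas_av[OF loc XM], where C=C]) (use bXC in auto)

  have bXn: "AE x in M. av (Xs n x) \<le> C" for n
  proof -
    interpret Fn: sigma_finite_subalgebra M "F n" by (rule sfs[OF P filt_subalg[OF filt]])
    obtain Cn where bn: "AE x in M. av (Xs n x) \<le> Cn" using XnL[of n] unfolding Linf_def by auto
    have zL: "(\<lambda>_. 0) \<in> Linf M (F n) av" unfolding Linf_def by auto
    have b0: "AE \<omega> in M. cond_esssup M (F n) (\<lambda>x. av (X x - Xs n x)) \<omega> \<le> cond_esssup M (F n) (\<lambda>x. av (X x)) \<omega>"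
      using best[OF zL] unfolding cond_norm_def by simp
    have c1: "AE \<omega> in M. cond_esssup M (F n) (\<lambda>x. av (X x)) \<omega> \<le> ennreal C"
    proof -
      have "AE \<omega> in M. \<forall>p. 0 \<le> real_cond_exp M (F n) (\<lambda>x. av (X x) ^ p) \<omega> \<and>
                             real_cond_exp M (F n) (\<lambda>x. av (X x) ^ p) \<omega> \<le> C ^ p"
        unfolding AE_all_countable
      proof
        fix p :: nat
        have pos: "AE \<omega> in M. 0 \<le> real_cond_exp M (F n) (\<lambda>x. av (X x) ^ p) \<omega>"
          by (rule Fn.real_cond_exp_pos) (use iX in auto)
        have pC: "AE x in M. av (X x) ^ p \<le> C ^ p" using bXC by eventually_elim (auto intro: power_mono)
        have le: "AE \<omega> in M. real_cond_exp M (F n) (\<lambda>x. av (X x) ^ p) \<omega> \<le> C ^ p"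
          by (rule Fn.real_cond_exp_le_c[OF iX pC])
        from pos le show "AE \<omega> in M. 0 \<le> real_cond_exp M (F n) (\<lambda>x. av (X x) ^ p) \<omega> \<and>
                             real_cond_exp M (F n) (\<lambda>x. av (X x) ^ p) \<omega> \<le> C ^ p"
          by eventually_elim auto
      qed
      then show ?thesis by eventually_elim (rule CN_le, auto simp: C0)
    qed
    have [measurable]: "(\<lambda>\<omega>. av (Xs n \<omega>)) \<in> borel_measurable (F n)" by (rule meas_av[OF loc XnF])
    define A where "A = {\<omega> \<in> space M. C < av (Xs n \<omega>)}"
    have AF: "A \<in> sets (F n)"
    proof -
      have "{\<omega> \<in> space (F n). C < av (Xs n \<omega>)} \<in> sets (F n)" by measurable
      then show ?thesis unfolding A_def using filt by simp
    qed
    have iXn: "integrable M (\<lambda>x. av (Xs n x) ^ p)" for p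
      by (rule int_pow[OF P meas_av[OF loc XnM], where C=Cn]) (use bn in auto)
    have loc1: "AE x in M. x \<in> A \<longrightarrow> real_cond_exp M (F n) (\<lambda>x. av (X x - Xs n x) ^ p) x
                 = real_cond_exp M (F n) (\<lambda>x. av (Xs n x) ^ p) x" for p
    proof (rule CE_local[OF P filt_subalg[OF filt] AF int_avdiff[OF loc P XM XnM bX bn] iXn])
      show "AE x in M. x \<in> A \<longrightarrow> av (X x - Xs n x) ^ p = av (Xs n x) ^ p"
        using bXC
      proof eventually_elim
        case (elim x)
        show ?case
        proof
          assume "x \<in> A"
          then have lt: "C < av (Xs n x)" unfolding A_def by simp
          have "av (X x - Xs n x) \<le> max (av (X x)) (av (Xs n x))" by (rule diff_le)
          then have le1: "av (X x - Xs n x) \<le> av (Xs n x)" using elim lt by auto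
          have "av (Xs n x) = av (X x - (X x - Xs n x))" by simp
          also have "\<dots> \<le> max (av (X x)) (av (X x - Xs n x))" by (rule diff_le)
          finally have "av (Xs n x) \<le> av (X x - Xs n x)" using elim lt by auto
          then show "av (X x - Xs n x) ^ p = av (Xs n x) ^ p" using le1 by simp
        qed
      qed
    qed
    have self: "AE x in M. real_cond_exp M (F n) (\<lambda>x. av (Xs n x) ^ p) x = av (Xs n x) ^ p" for p
      by (rule Fn.real_cond_exp_F_meas[OF iXn]) measurable
    have "AE x in M. x \<in> A \<longrightarrow> (\<forall>p. real_cond_exp M (F n) (\<lambda>x. av (X x - Xs n x) ^ p) x = av (Xs n x) ^ p)"
    proof -
      have "AE x in M. \<forall>p. x \<in> A \<longrightarrow> real_cond_exp M (F n) (\<lambda>x. av (X x - Xs n x) ^ p) x = av (Xs n x) ^ p"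
        unfolding AE_all_countable
      proof
        fix p show "AE x in M. x \<in> A \<longrightarrow> real_cond_exp M (F n) (\<lambda>x. av (X x - Xs n x) ^ p) x = av (Xs n x) ^ p"
          using loc1[of p] self[of p] by eventually_elim auto
      qed
      then show ?thesis by eventually_elim auto
    qed
    then have "AE x in M. x \<in> A \<longrightarrow> cond_esssup M (F n) (\<lambda>x. av (X x - Xs n x)) x = ennreal (av (Xs n x))"
      by eventually_elim (auto intro: CN_self)
    then show ?thesis using b0 c1 AE_space
    proof eventually_elim
      case (elim x)
      show ?case
      proof (cases "x \<in> A")
        case True
        then have "ennreal (av (Xs n x)) \<le> ennreal C" using elim by (metis order_trans)
        then have "av (Xs n x) \<le> C" using C0 by (simp add: ennreal_le_iff)
        then show ?thesis .
      next
        case False then show ?thesis using elim unfolding A_def by auto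
      qed
    qed
  qed
  have bY: "AE x in M. av (Y x) \<le> C"
  proof -
    have "AE x in M. \<forall>n. av (Xs n x) \<le> C" unfolding AE_all_countable using bXn by blast
    then show ?thesis unfolding Y_def by eventually_elim auto
  qed
  have YFT: "Y \<in> measurable (stopped_sigma M F T) (kborel av)"
    by (rule st_measurable[OF filt st XnF]) (simp add: Y_def)
  have YM: "Y \<in> measurable M (kborel av)"
    using measurable_from_subalg[OF st_subalg[OF filt st] YFT] .
  have YL: "Y \<in> Linf M (stopped_sigma M F T) av" unfolding Linf_def using YFT bY by auto
  have mini: "AE \<omega> in M. cond_norm M (stopped_sigma M F T) av (\<lambda>x. X x - Y x) \<omega>
      \<le> cond_norm M (stopped_sigma M F T) av (\<lambda>x. X x - Z x) \<omega>"
    if ZL: "Z \<in> Linf M (stopped_sigma M F T) av" for Z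
  proof -
    have ZFT: "Z \<in> measurable (stopped_sigma M F T) (kborel av)" using ZL unfolding Linf_def by auto
    have ZM: "Z \<in> measurable M (kborel av)"
      using measurable_from_subalg[OF st_subalg[OF filt st] ZFT] .
    obtain Cz where bZ: "AE x in M. av (Z x) \<le> Cz" using ZL unfolding Linf_def by auto
    have each: "AE x in M. T x = n \<longrightarrow> cond_esssup M (stopped_sigma M F T) (\<lambda>x. av (X x - Y x)) x
         \<le> cond_esssup M (stopped_sigma M F T) (\<lambda>x. av (X x - Z x)) x" for n
    proof -
      define Zn where "Zn = (\<lambda>\<omega>. if T \<omega> = n then Z \<omega> else 0)"
      have ZnF: "Zn \<in> measurable (F n) (kborel av)" unfolding Zn_def
        by (rule st_restrict[OF filt st ZFT]) simp
      have ZnM: "Zn \<in> measurable M (kborel av)"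
        using measurable_from_subalg[OF filt_subalg[OF filt] ZnF] .
      have bZn: "AE x in M. av (Zn x) \<le> max Cz 0" using bZ unfolding Zn_def by eventually_elim auto
      have ZnL: "Zn \<in> Linf M (F n) av" unfolding Linf_def using ZnF bZn by auto
      have b1: "AE \<omega> in M. cond_esssup M (F n) (\<lambda>x. av (X x - Xs n x)) \<omega> \<le> cond_esssup M (F n) (\<lambda>x. av (X x - Zn x)) \<omega>"
        using best[OF ZnL] unfolding cond_norm_def .
      define A where "A = {\<omega> \<in> space M. T \<omega> = n}"
      have AF: "A \<in> sets (F n)" unfolding A_def by (rule st_Tn[OF st])
      have a1: "AE x in M. \<forall>p. T x = n \<longrightarrow> real_cond_exp M (stopped_sigma M F T) (\<lambda>x. av (X x - Y x) ^ p) x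
            = real_cond_exp M (F n) (\<lambda>x. av (X x - Y x) ^ p) x"
        unfolding AE_all_countable
        by (intro allI CE_stopped[OF P filt st] int_avdiff[OF loc P XM YM bX bY])
      have a2: "AE x in M. \<forall>p. x \<in> A \<longrightarrow> real_cond_exp M (F n) (\<lambda>x. av (X x - Y x) ^ p) x
            = real_cond_exp M (F n) (\<lambda>x. av (X x - Xs n x) ^ p) x"
        unfolding AE_all_countable
        by (intro allI CE_local[OF P filt_subalg[OF filt] AF int_avdiff[OF loc P XM YM bX bY]
              int_avdiff[OF loc P XM XnM bX bXn]] AE_I2) (simp add: A_def Y_def)
      have c1: "AE x in M. \<forall>p. x \<in> A \<longrightarrow> real_cond_exp M (F n) (\<lambda>x. av (X x - Zn x) ^ p) x
            = real_cond_exp M (F n) (\<lambda>x. av (X x - Z x) ^ p) x"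
        unfolding AE_all_countable
        by (intro allI CE_local[OF P filt_subalg[OF filt] AF int_avdiff[OF loc P XM ZnM bX bZn]
              int_avdiff[OF loc P XM ZM bX bZ]] AE_I2) (simp add: A_def Zn_def)
      have c2: "AE x in M. \<forall>p. T x = n \<longrightarrow> real_cond_exp M (stopped_sigma M F T) (\<lambda>x. av (X x - Z x) ^ p) x
            = real_cond_exp M (F n) (\<lambda>x. av (X x - Z x) ^ p) x"
        unfolding AE_all_countable
        by (intro allI CE_stopped[OF P filt st] int_avdiff[OF loc P XM ZM bX bZ])
      show ?thesis using a1 a2 c1 c2 b1 AE_space
      proof eventually_elim
        case (elim x)
        show ?case
        proof
          assume Tx: "T x = n"
          then have xA: "x \<in> A" unfolding A_def using elim by auto
          have e1: "cond_esssup M (stopped_sigma M F T) (\<lambda>x. av (X x - Y x)) x = cond_esssup M (F n) (\<lambda>x. av (X x - Xs n x)) x"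
            by (rule CN_pt) (use elim Tx xA in auto)
          have e2: "cond_esssup M (F n) (\<lambda>x. av (X x - Zn x)) x = cond_esssup M (stopped_sigma M F T) (\<lambda>x. av (X x - Z x)) x"
            by (rule CN_pt) (use elim Tx xA in auto)
          show "cond_esssup M (stopped_sigma M F T) (\<lambda>x. av (X x - Y x)) x
             \<le> cond_esssup M (stopped_sigma M F T) (\<lambda>x. av (X x - Z x)) x"
            using e1 e2 elim by metis
        qed
      qed
    qed
    have "AE x in M. \<forall>n. T x = n \<longrightarrow> cond_esssup M (stopped_sigma M F T) (\<lambda>x. av (X x - Y x)) x
         \<le> cond_esssup M (stopped_sigma M F T) (\<lambda>x. av (X x - Z x)) x"
      unfolding AE_all_countable using each by blast
    then show ?thesis unfolding cond_norm_def by eventually_elim auto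
  qed
  show ?thesis unfolding Yeq kcond_exp_def using YL mini by blast
qed


end
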